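(* Let $\varphi\in L_{loc}(\mathbb{R}^n_+)$ be nonnegative. Then for every $r\ge1$ and every $\alpha\in\mathbb{R}$, $$\int_{\mathbb{R}^n_+}(T\varphi(x))^r\pi(x)^\alpha\,dx\le 2^{\max(1,\alpha)n}\int_{\mathbb{R}^n_+}\varphi(x)^r\pi(x)^\alpha\,dx.$$
   Context: $\mathbb{R}^n_+=(0,\infty)^n$. For $x=(x_1,\dots,x_n)\in\mathbb{R}^n_+$, $\pi(x)=\prod_{k=1}^n x_k$ and $Q(x)=[x_1/2,x_1]\times\cdots\times[x_n/2,x_n]$. For nonnegative $\varphi\in L_{loc}(\mathbb{R}^n_+)$, $T\varphi(x)=\frac{1}{|Q(x)|}\int_{Q(x)}\varphi(u)\,du$. *)

theory Defs
  imports "HOL-Analysis.Analysis"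
begin

definition pos_orthant :: "(real^'n) set" where
  "pos_orthant = {x. \<forall>i. 0 < x $ i}"

definition piprod :: "real^'n \<Rightarrow> real" where
  "piprod x = (\<Prod>i\<in>UNIV. x $ i)"

definition Qbox :: "real^'n \<Rightarrow> (real^'n) set" where
  "Qbox x = cbox ((1/2) *\<^sub>R x) x"

definition Tavg :: "(real^'n \<Rightarrow> real) \<Rightarrow> real^'n \<Rightarrow> real" where
  "Tavg \<phi> x = (LINT u:Qbox x|lebesgue. \<phi> u) / measure lebesgue (Qbox x)"

definition loc_integrable_pos :: "(real^'n \<Rightarrow> real) \<Rightarrow> bool" where
  "loc_integrable_pos \<phi> \<longleftrightarrow>
     (\<forall>K. compact K \<and> K \<subseteq> pos_orthant \<longrightarrow> set_integrable lebesgue K \<phi>)"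

end

theory Submission
  imports Defs
begin

lemma tangent_powr:
  fixes m t r :: real
  assumes "0 < m" "0 \<le> t" "1 \<le> r"
  shows "m powr r + r * m powr (r - 1) * (t - m) \<le> t powr r"
proof (cases "t = 0")
  case True
  have "m powr r = m powr (r-1) * m" using assms by (simp add: powr_diff)
  then have "m powr r + r * m powr (r - 1) * (0 - m) = (1 - r) * m powr r" by (simp add: algebra_simps)
  also have "... \<le> 0" using assms by (simp add: mult_nonpos_nonneg)
  finally show ?thesis using True by simp
next
  case False
  have d: "((\<lambda>z. z powr r) has_field_derivative r * m powr (r - 1)) (at m within {0<..})"
    by (rule has_field_derivative_at_within, rule has_real_derivative_powr) (use assms in auto)
  have "t powr r - m powr r \<ge> r * m powr (r - 1) * (t - m)"
    by (rule convex_on_imp_above_tangent[OF powr_convex[OF assms(3)] _ _ _ d]) (use assms False in \<open>auto simp: interior_open\<close>)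
  then show ?thesis by simp
qed

lemma jensen_set:
  fixes f :: "'a::euclidean_space \<Rightarrow> real"
  assumes Q: "Q \<in> sets lebesgue" "emeasure lebesgue Q < \<infinity>" "0 < measure lebesgue Q"
    and int: "set_integrable lebesgue Q f" and nn: "\<forall>u\<in>Q. 0 \<le> f u" and r: "1 \<le> r"
  shows "ennreal (((LINT u:Q|lebesgue. f u) / measure lebesgue Q) powr r * measure lebesgue Q)
        \<le> (\<integral>\<^sup>+u. ennreal (f u powr r) * indicator Q u \<partial>lebesgue)"
proof -
  define \<mu> where "\<mu> = measure lebesgue Q"
  define I where "I = (LINT u:Q|lebesgue. f u)"
  define m where "m = I / \<mu>"
  have intf: "integrable lebesgue (\<lambda>u. indicator Q u * f u)"
    using int by (simp add: set_integrable_def)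
  have I_eq: "I = (\<integral>u. indicator Q u * f u \<partial>lebesgue)"
    by (simp add: I_def set_lebesgue_integral_def)
  have fm: "(\<lambda>u. indicator Q u * f u) \<in> borel_measurable lebesgue"
    using intf by auto
  have eqr: "(\<lambda>u. indicator Q u * f u powr r) = (\<lambda>u. (indicator Q u * f u) powr r)"
    by (auto simp: indicator_def)
  have gm: "(\<lambda>u. indicator Q u * f u powr r) \<in> borel_measurable lebesgue"
    unfolding eqr using fm by measurable
  have Neq: "(\<integral>\<^sup>+u. ennreal (f u powr r) * indicator Q u \<partial>lebesgue)
      = (\<integral>\<^sup>+u. ennreal (indicator Q u * f u powr r) \<partial>lebesgue)"
    by (intro nn_integral_cong) (auto simp: indicator_def)
  have I0: "0 \<le> I" unfolding I_eq
    by (intro integral_nonneg_AE) (use nn in \<open>auto simp: indicator_def\<close>)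
  have mu0: "0 < \<mu>" using Q by (simp add: \<mu>_def)
  have m0: "0 \<le> m" using I0 mu0 by (simp add: m_def)
  show ?thesis
  proof (cases "(\<integral>\<^sup>+u. ennreal (indicator Q u * f u powr r) \<partial>lebesgue) = \<infinity>")
    case True then show ?thesis by (simp add: Neq)
  next
    case False
    have intg: "integrable lebesgue (\<lambda>u. indicator Q u * f u powr r)"
      by (rule integrableI_nonneg[OF gm]) (use False in \<open>auto simp: top.not_eq_extremum\<close>)
    have Neq2: "(\<integral>\<^sup>+u. ennreal (indicator Q u * f u powr r) \<partial>lebesgue)
        = ennreal (\<integral>u. indicator Q u * f u powr r \<partial>lebesgue)"
      by (rule nn_integral_eq_integral[OF intg]) auto
    have key: "m powr r * \<mu> \<le> (\<integral>u. indicator Q u * f u powr r \<partial>lebesgue)"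
    proof (cases "m = 0")
      case True then show ?thesis by (auto intro!: integral_nonneg_AE)
    next
      case False
      then have mpos: "0 < m" using m0 by simp
      define A where "A = m powr r" define B where "B = r * m powr (r - 1)"
      have "(\<integral>u. indicator Q u * (A + B * (f u - m)) \<partial>lebesgue)
          = (\<integral>u. (A - B * m) * indicator Q u + B * (indicator Q u * f u) \<partial>lebesgue)"
        by (rule Bochner_Integration.integral_cong) (auto simp: algebra_simps)
      also have "... = (A - B * m) * \<mu> + B * I"
        using Q intf by (simp add: I_eq \<mu>_def)
      also have "... = A * \<mu>" using mu0 by (simp add: m_def algebra_simps)
      finally have e: "(\<integral>u. indicator Q u * (A + B * (f u - m)) \<partial>lebesgue) = A * \<mu>" .
      have "(\<integral>u. indicator Q u * (A + B * (f u - m)) \<partial>lebesgue) \<le> (\<integral>u. indicator Q u * f u powr r \<partial>lebesgue)"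
      proof (rule integral_mono[OF _ intg])
        have "integrable lebesgue (\<lambda>u. (A - B * m) * indicator Q u + B * (indicator Q u * f u))"
          using Q intf by simp
        moreover have "(\<lambda>u. (A - B * m) * indicator Q u + B * (indicator Q u * f u)) = (\<lambda>u. indicator Q u * (A + B * (f u - m)))"
          by (auto simp: algebra_simps)
        ultimately show "integrable lebesgue (\<lambda>u. indicator Q u * (A + B * (f u - m)))"
          by simp
      next
        fix u show "indicator Q u * (A + B * (f u - m)) \<le> indicator Q u * f u powr r"
          using tangent_powr[OF mpos _ r, of "f u"] nn by (auto simp: indicator_def A_def B_def)
      qed
      then show ?thesis using e by (simp add: A_def)
    qed
    show ?thesis unfolding Neq Neq2 using key by (simp add: m_def I_def \<mu>_def)
  qed
qed

lemma fst_nth_meas[measurable]: "(\<lambda>p::(real^'n) \<times> (real^'m). fst p $ i) \<in> borel_measurable (lborel \<Otimes>\<^sub>M lborel)"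
  by (rule measurable_compose[OF measurable_fst]) measurable
lemma snd_nth_meas[measurable]: "(\<lambda>p::(real^'n) \<times> (real^'m). snd p $ i) \<in> borel_measurable (lborel \<Otimes>\<^sub>M lborel)"
  by (rule measurable_compose[OF measurable_snd]) measurable

lemma mem_Qbox: "u \<in> Qbox x \<longleftrightarrow> (\<forall>i. x$i/2 \<le> u$i \<and> u$i \<le> x$i)"
  by (simp add: Qbox_def mem_box_cart)

lemma Qbox_sub: "x \<in> pos_orthant \<Longrightarrow> Qbox x \<subseteq> pos_orthant"
  unfolding pos_orthant_def subset_iff mem_Qbox mem_Collect_eq
  by (metis half_gt_zero order_less_le_trans)

lemma measure_Qbox:
  fixes x :: "real^'n"
  assumes "x \<in> pos_orthant"
  shows "measure lborel (Qbox x) = piprod x / 2 ^ CARD('n)"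
proof -
  have "x \<in> Qbox x" using assms by (auto simp: mem_Qbox pos_orthant_def less_imp_le)
  then have ne: "Qbox x \<noteq> {}" by auto
  have "measure lborel (Qbox x) = (\<Prod>i\<in>UNIV. x$i - ((1/2) *\<^sub>R x)$i)"
    using ne unfolding Qbox_def by (rule content_cbox_cart)
  also have "... = (\<Prod>i\<in>UNIV. x$i / 2)" by simp
  also have "... = piprod x / 2 ^ CARD('n)" by (simp add: piprod_def prod_dividef)
  finally show ?thesis .
qed

lemma emeasure_cbox2:
  assumes "u \<in> pos_orthant"
  shows "emeasure lborel (cbox u (2 *\<^sub>R u)) = ennreal (piprod u)"
proof -
  have "u \<in> cbox u (2 *\<^sub>R u)" using assms by (auto simp: mem_box_cart pos_orthant_def less_imp_le)
  then have ne: "cbox u (2 *\<^sub>R u) \<noteq> {}" by auto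
  have "emeasure lborel (cbox u (2 *\<^sub>R u)) = ennreal (measure lborel (cbox u (2 *\<^sub>R u)))"
    by (simp add: emeasure_eq_measure2 emeasure_lborel_cbox_finite)
  also have "measure lborel (cbox u (2 *\<^sub>R u)) = (\<Prod>i\<in>UNIV. (2 *\<^sub>R u)$i - u$i)"
    using ne by (rule content_cbox_cart)
  also have "... = piprod u" by (simp add: piprod_def)
  finally show ?thesis .
qed

lemma piprod_pos: "x \<in> pos_orthant \<Longrightarrow> 0 < piprod x"
  by (simp add: piprod_def pos_orthant_def prod_pos)

lemma piprod_bounds:
  fixes u x :: "real^'n"
  assumes "u \<in> pos_orthant" "x \<in> cbox u (2 *\<^sub>R u)"
  shows "piprod u \<le> piprod x" "piprod x \<le> 2 ^ CARD('n) * piprod u"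
proof -
  have h: "\<And>i. 0 < u$i \<and> u$i \<le> x$i \<and> x$i \<le> 2 * u$i" using assms by (auto simp: pos_orthant_def mem_box_cart)
  show "piprod u \<le> piprod x" unfolding piprod_def
    by (rule prod_mono) (use h in \<open>auto intro: less_imp_le\<close>)
  have "piprod x \<le> (\<Prod>i\<in>UNIV. 2 * u$i)" unfolding piprod_def
    by (rule prod_mono) (use h in \<open>auto intro: less_imp_le order_trans\<close>)
  also have "... = 2 ^ CARD('n) * piprod u" by (simp add: piprod_def prod.distrib)
  finally show "piprod x \<le> 2 ^ CARD('n) * piprod u" .
qed


lemma psi_meas:
  fixes \<phi> :: "real^'n \<Rightarrow> real"
  assumes "loc_integrable_pos \<phi>"
  shows "(\<lambda>x. indicator pos_orthant x * \<phi> x) \<in> borel_measurable lebesgue"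
proof -
  define K where "K m = cbox (\<chi> i. 1 / real (Suc m)) (\<chi> i. real (Suc m) :: real^'n)" for m
  have Ksub: "K m \<subseteq> pos_orthant" for m
    unfolding K_def pos_orthant_def subset_iff mem_box_cart mem_Collect_eq
    by (metis of_nat_0_less_iff order_less_le_trans vec_lambda_beta zero_less_Suc zero_less_divide_1_iff)
  have meas: "(\<lambda>x. indicator (K m) x * \<phi> x) \<in> borel_measurable lebesgue" for m
  proof -
    have "set_integrable lebesgue (K m) \<phi>"
      using assms Ksub[of m] unfolding loc_integrable_pos_def by (auto simp: K_def)
    then show ?thesis unfolding set_integrable_def by (auto dest: borel_measurable_integrable)
  qed
  show ?thesis
  proof (rule borel_measurable_LIMSEQ_real[OF _ meas])
    fix x :: "real^'n"
    show "(\<lambda>m. indicator (K m) x * \<phi> x) \<longlonglongrightarrow> indicator pos_orthant x * \<phi> x"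
    proof (cases "x \<in> pos_orthant")
      case False
      then have "\<And>m. x \<notin> K m" using Ksub by blast
      then show ?thesis using False by simp
    next
      case True
      have "eventually (\<lambda>m. 1 / real (Suc m) \<le> x$i \<and> x$i \<le> real (Suc m)) sequentially" for i
      proof -
        have xi: "0 < x$i" using True by (simp add: pos_orthant_def)
        obtain N :: nat where N: "max (1 / x$i) (x$i) < N" using reals_Archimedean2 by blast
        show ?thesis
        proof (rule eventually_sequentiallyI[of N])
          fix m assume "N \<le> m"
          then have mN: "real N \<le> real (Suc m)" by simp
          have "1 / x$i \<le> real (Suc m)" using N mN by linarith
          then have "1 / real (Suc m) \<le> x$i" using xi
            by (simp add: divide_le_eq mult.commute)
          moreover have "x$i \<le> real (Suc m)" using N mN by linarith
          ultimately show "1 / real (Suc m) \<le> x$i \<and> x$i \<le> real (Suc m)" by simp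
        qed
      qed
      then have "eventually (\<lambda>m. \<forall>i. 1 / real (Suc m) \<le> x$i \<and> x$i \<le> real (Suc m)) sequentially"
        by (rule eventually_all_finite)
      then have "eventually (\<lambda>m. indicator (K m) x * \<phi> x = indicator pos_orthant x * \<phi> x) sequentially"
        by eventually_elim (use True in \<open>auto simp: K_def mem_box_cart\<close>)
      then show ?thesis by (rule tendsto_eventually)
    qed
  qed
qed


lemma c0_bound:
  fixes u x :: "real^'n"
  assumes u: "u \<in> pos_orthant" and x: "x \<in> cbox u (2 *\<^sub>R u)"
  shows "piprod x powr (\<alpha> - 1) \<le> (if 1 \<le> \<alpha> then 2 powr (real CARD('n) * (\<alpha> - 1)) else 1) * piprod u powr (\<alpha> - 1)"
proof -
  have pu: "0 < piprod u" using u by (rule piprod_pos)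
  note b = piprod_bounds[OF u x]
  show ?thesis
  proof (cases "1 \<le> \<alpha>")
    case True
    have "piprod x powr (\<alpha> - 1) \<le> (2 ^ CARD('n) * piprod u) powr (\<alpha> - 1)"
      by (rule powr_mono2) (use True pu b in auto)
    also have "... = (2 ^ CARD('n)) powr (\<alpha> - 1) * piprod u powr (\<alpha> - 1)" by (rule powr_mult)
    also have "(2 ^ CARD('n) :: real) = 2 powr real CARD('n)" by (simp add: powr_realpow)
    also have "(2 powr real CARD('n)) powr (\<alpha> - 1) = 2 powr (real CARD('n) * (\<alpha> - 1))" by (rule powr_powr)
    finally show ?thesis using True by simp
  next
    case False
    have "piprod x powr (\<alpha> - 1) \<le> piprod u powr (\<alpha> - 1)"
      by (rule powr_mono2') (use False pu b in auto)
    then show ?thesis using False by simp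
  qed
qed

lemma const_eq:
  "(if 1 \<le> \<alpha> then 2 powr (real CARD('n) * (\<alpha> - 1)) else 1) * 2 ^ CARD('n) = (2::real) powr (max 1 \<alpha> * real CARD('n))"
proof -
  have p: "(2::real) ^ CARD('n) = 2 powr real CARD('n)" by (simp add: powr_realpow)
  show ?thesis
  proof (cases "1 \<le> \<alpha>")
    case True
    then show ?thesis unfolding p by (simp add: powr_add[symmetric] algebra_simps max_def)
  next
    case False
    then show ?thesis unfolding p by (simp add: max_def)
  qed
qed


lemma P_sets[measurable]: "(pos_orthant :: (real^'n) set) \<in> sets lborel"
proof -
  have "Measurable.pred lborel (\<lambda>x::real^'n. \<forall>i. 0 < x $ i)" by measurable
  then show ?thesis by (simp add: pos_orthant_def pred_def space_lborel Collect_conv_if)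
qed

lemma Qbox_sets[measurable]: "Qbox x \<in> sets lborel"
  by (simp add: Qbox_def)

theorem lemma5p1:
  fixes \<phi> :: "real^'n \<Rightarrow> real" and r \<alpha> :: real
  assumes "loc_integrable_pos \<phi>"
    and "\<forall>x\<in>pos_orthant. 0 \<le> \<phi> x"
    and "1 \<le> r"
  shows "(\<integral>\<^sup>+ x\<in>pos_orthant. ennreal ((Tavg \<phi> x) powr r * piprod x powr \<alpha>) \<partial>lebesgue)
       \<le> ennreal (2 powr (max 1 \<alpha> * real CARD('n)))
         * (\<integral>\<^sup>+ x\<in>pos_orthant. ennreal ((\<phi> x) powr r * piprod x powr \<alpha>) \<partial>lebesgue)"
proof -
  define \<psi> where "\<psi> u = indicator pos_orthant u * \<phi> u" for u
  define h where "h u = ennreal (\<psi> u powr r)" for u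
  have \<psi>m: "\<psi> \<in> borel_measurable lebesgue" using psi_meas[OF assms(1)] by (simp add: \<psi>_def[abs_def])
  have hm: "h \<in> borel_measurable lebesgue" unfolding h_def[abs_def] using \<psi>m by measurable
  obtain g where gm[measurable]: "g \<in> borel_measurable lborel" and gae: "AE u in lborel. h u = g u"
    using completion_ex_borel_measurable[OF hm] by blast
  define c0 where "c0 x = 2 ^ CARD('n) * piprod x powr (\<alpha> - 1)" for x :: "real^'n"
  define C where "C = (2::real) powr (max 1 \<alpha> * real CARD('n))"
  define S where "S = {p::(real^'n)\<times>(real^'n). \<forall>i. 0 < fst p $ i \<and> fst p $ i / 2 \<le> snd p $ i \<and> snd p $ i \<le> fst p $ i}"
  define K where "K x u = ennreal (c0 x) * g u * indicator S (x,u)" for x u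
  have S_iff: "(x,u) \<in> S \<longleftrightarrow> x \<in> pos_orthant \<and> u \<in> Qbox x" for x u
    by (auto simp: S_def pos_orthant_def mem_Qbox)
  have A: "ennreal (Tavg \<phi> x powr r * piprod x powr \<alpha>)
      \<le> ennreal (c0 x) * (\<integral>\<^sup>+u. ennreal (\<phi> u powr r) * indicator (Qbox x) u \<partial>lebesgue)"
    if x: "x \<in> pos_orthant" for x
  proof -
    have Qs: "Qbox x \<in> sets lebesgue" by (simp add: Qbox_def)
    have Qfin: "emeasure lebesgue (Qbox x) < \<infinity>" using emeasure_lborel_cbox_finite by (simp add: Qbox_def)
    have mq: "measure lebesgue (Qbox x) = piprod x / 2 ^ CARD('n)"
      using measure_Qbox[OF x] by (simp add: Qbox_def)
    have pp: "0 < piprod x" using x by (rule piprod_pos)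
    have mpos: "0 < measure lebesgue (Qbox x)" using mq pp by simp
    have int: "set_integrable lebesgue (Qbox x) \<phi>"
      using assms(1) Qbox_sub[OF x] unfolding loc_integrable_pos_def by (simp add: Qbox_def)
    have nn: "\<forall>u\<in>Qbox x. 0 \<le> \<phi> u" using assms(2) Qbox_sub[OF x] by blast
    note J = jensen_set[OF Qs Qfin mpos int nn assms(3)]
    have eq: "Tavg \<phi> x powr r * piprod x powr \<alpha> = c0 x * (Tavg \<phi> x powr r * measure lebesgue (Qbox x))"
    proof -
      have "piprod x powr \<alpha> = piprod x powr (\<alpha> - 1) * piprod x"
        using pp by (simp add: powr_diff)
      then show ?thesis unfolding mq c0_def by simp
    qed
    have c0n: "0 \<le> c0 x" by (simp add: c0_def)
    have "ennreal (Tavg \<phi> x powr r * piprod x powr \<alpha>) = ennreal (c0 x) * ennreal (Tavg \<phi> x powr r * measure lebesgue (Qbox x))"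
      unfolding eq using c0n by (simp add: ennreal_mult)
    also have "... \<le> ennreal (c0 x) * (\<integral>\<^sup>+u. ennreal (\<phi> u powr r) * indicator (Qbox x) u \<partial>lebesgue)"
      by (rule mult_left_mono) (use J in \<open>simp_all add: Tavg_def\<close>)
    finally show ?thesis .
  qed
  have B: "(\<integral>\<^sup>+u. ennreal (\<phi> u powr r) * indicator (Qbox x) u \<partial>lebesgue)
      = (\<integral>\<^sup>+u. g u * indicator (Qbox x) u \<partial>lborel)" if x: "x \<in> pos_orthant" for x
  proof -
    have "(\<integral>\<^sup>+u. ennreal (\<phi> u powr r) * indicator (Qbox x) u \<partial>lebesgue) = (\<integral>\<^sup>+u. h u * indicator (Qbox x) u \<partial>lebesgue)"
      by (rule nn_integral_cong) (use Qbox_sub[OF x] in \<open>auto simp: h_def \<psi>_def indicator_def\<close>)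
    also have "... = (\<integral>\<^sup>+u. h u * indicator (Qbox x) u \<partial>lborel)" by (rule nn_integral_completion)
    also have "... = (\<integral>\<^sup>+u. g u * indicator (Qbox x) u \<partial>lborel)"
      by (rule nn_integral_cong_AE) (use gae in auto)
    finally show ?thesis .
  qed
  have Cst: "(\<integral>\<^sup>+ x\<in>pos_orthant. ennreal ((Tavg \<phi> x) powr r * piprod x powr \<alpha>) \<partial>lebesgue)
      \<le> (\<integral>\<^sup>+x. ennreal (c0 x) * (\<integral>\<^sup>+u. g u * indicator (Qbox x) u \<partial>lborel) * indicator pos_orthant x \<partial>lborel)"
  proof -
    have "(\<integral>\<^sup>+ x\<in>pos_orthant. ennreal ((Tavg \<phi> x) powr r * piprod x powr \<alpha>) \<partial>lebesgue)
       = (\<integral>\<^sup>+ x\<in>pos_orthant. ennreal ((Tavg \<phi> x) powr r * piprod x powr \<alpha>) \<partial>lborel)"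
      by (rule nn_integral_completion)
    also have "... \<le> (\<integral>\<^sup>+x. ennreal (c0 x) * (\<integral>\<^sup>+u. g u * indicator (Qbox x) u \<partial>lborel) * indicator pos_orthant x \<partial>lborel)"
    proof (rule nn_integral_mono)
      fix x :: "real^'n"
      show "ennreal ((Tavg \<phi> x) powr r * piprod x powr \<alpha>) * indicator pos_orthant x
          \<le> ennreal (c0 x) * (\<integral>\<^sup>+u. g u * indicator (Qbox x) u \<partial>lborel) * indicator pos_orthant x"
        using A[of x] B[of x] by (cases "x \<in> pos_orthant") auto
    qed
    finally show ?thesis .
  qed
  have D: "(\<integral>\<^sup>+x. ennreal (c0 x) * (\<integral>\<^sup>+u. g u * indicator (Qbox x) u \<partial>lborel) * indicator pos_orthant x \<partial>lborel)
      = (\<integral>\<^sup>+x. (\<integral>\<^sup>+u. K x u \<partial>lborel) \<partial>lborel)"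
  proof (rule nn_integral_cong)
    fix x :: "real^'n"
    have "(\<integral>\<^sup>+u. K x u \<partial>lborel) = (\<integral>\<^sup>+u. (ennreal (c0 x) * indicator pos_orthant x) * (g u * indicator (Qbox x) u) \<partial>lborel)"
      by (rule nn_integral_cong) (auto simp: K_def S_iff indicator_def)
    also have "... = (ennreal (c0 x) * indicator pos_orthant x) * (\<integral>\<^sup>+u. g u * indicator (Qbox x) u \<partial>lborel)"
      by (rule nn_integral_cmult) measurable
    finally show "ennreal (c0 x) * (\<integral>\<^sup>+u. g u * indicator (Qbox x) u \<partial>lborel) * indicator pos_orthant x = (\<integral>\<^sup>+u. K x u \<partial>lborel)"
      by (simp add: ac_simps)
  qed
  have Km: "case_prod K \<in> borel_measurable (lborel \<Otimes>\<^sub>M lborel)"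
  proof -
    have [measurable]: "(\<lambda>p::(real^'n) \<times> (real^'n). g (snd p)) \<in> borel_measurable (lborel \<Otimes>\<^sub>M lborel)"
      by (rule measurable_compose[OF measurable_snd gm])
    have "(\<lambda>p::(real^'n) \<times> (real^'n). ennreal (2 ^ CARD('n) * (\<Prod>i\<in>UNIV. fst p $ i) powr (\<alpha> - 1)) * g (snd p) * indicator {p. \<forall>i. 0 < fst p $ i \<and> fst p $ i / 2 \<le> snd p $ i \<and> snd p $ i \<le> fst p $ i} p) \<in> borel_measurable (lborel \<Otimes>\<^sub>M lborel)"
      by measurable
    then show ?thesis by (simp add: K_def c0_def piprod_def S_def case_prod_beta')
  qed
  have F: "(\<integral>\<^sup>+x. (\<integral>\<^sup>+u. K x u \<partial>lborel) \<partial>lborel) = (\<integral>\<^sup>+u. (\<integral>\<^sup>+x. K x u \<partial>lborel) \<partial>lborel)"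
    by (rule lborel_pair.Fubini'[OF Km, symmetric])
  have E: "(\<integral>\<^sup>+x. K x u \<partial>lborel) \<le> ennreal C * (g u * ennreal (piprod u powr \<alpha>) * indicator pos_orthant u)" for u
  proof (cases "u \<in> pos_orthant")
    case False
    have "K x u = 0" for x
      using False Qbox_sub by (auto simp: K_def S_iff indicator_def)
    then show ?thesis by simp
  next
    case True
    define e where "e = (if 1 \<le> \<alpha> then 2 powr (real CARD('n) * (\<alpha> - 1)) else (1::real))"
    define d where "d = 2 ^ CARD('n) * (e * piprod u powr (\<alpha> - 1))"
    have pu: "0 < piprod u" using True by (rule piprod_pos)
    have e0: "0 \<le> e" by (simp add: e_def)
    have d0: "0 \<le> d" using e0 by (simp add: d_def)
    have "(\<integral>\<^sup>+x. K x u \<partial>lborel) \<le> (\<integral>\<^sup>+x. (g u * ennreal d) * indicator (cbox u (2 *\<^sub>R u)) x \<partial>lborel)"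
    proof (rule nn_integral_mono)
      fix x :: "real^'n"
      show "K x u \<le> (g u * ennreal d) * indicator (cbox u (2 *\<^sub>R u)) x"
      proof (cases "(x,u) \<in> S")
        case False then show ?thesis by (simp add: K_def)
      next
        case xS: True
        then have xP: "x \<in> pos_orthant" and uQ: "u \<in> Qbox x" by (auto simp: S_iff)
        have xc: "x \<in> cbox u (2 *\<^sub>R u)"
          using uQ unfolding mem_Qbox mem_box_cart by (auto simp: field_simps)
        have "c0 x \<le> d"
          using c0_bound[OF True xc, of \<alpha>] by (simp add: c0_def d_def e_def)
        then have "ennreal (c0 x) * g u \<le> ennreal d * g u"
          by (intro mult_right_mono ennreal_leI) auto
        then show ?thesis using xS xc by (simp add: K_def mult.commute)
      qed
    qed
    also have "... = g u * ennreal d * ennreal (piprod u)"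
      by (simp add: nn_integral_cmult_indicator emeasure_cbox2[OF True])
    also have "... = ennreal C * (g u * ennreal (piprod u powr \<alpha>) * indicator pos_orthant u)"
    proof -
      have "d * piprod u = C * piprod u powr \<alpha>"
      proof -
        have "piprod u powr \<alpha> = piprod u powr (\<alpha> - 1) * piprod u"
          using pu by (simp add: powr_diff)
        moreover have "e * 2 ^ CARD('n) = C" unfolding e_def C_def by (rule const_eq)
        ultimately show ?thesis unfolding d_def by (simp add: algebra_simps)
      qed
      then have "g u * ennreal d * ennreal (piprod u) = g u * ennreal (C * piprod u powr \<alpha>)"
        using d0 pu by (simp add: ennreal_mult[symmetric] mult.assoc)
      also have "... = g u * (ennreal C * ennreal (piprod u powr \<alpha>))"
        by (subst ennreal_mult) (auto simp: C_def)
      finally show ?thesis using True by (simp add: ac_simps)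
    qed
    finally show ?thesis .
  qed
  have G: "(\<integral>\<^sup>+u. ennreal C * (g u * ennreal (piprod u powr \<alpha>) * indicator pos_orthant u) \<partial>lborel)
      = ennreal C * (\<integral>\<^sup>+ x\<in>pos_orthant. ennreal ((\<phi> x) powr r * piprod x powr \<alpha>) \<partial>lebesgue)"
  proof -
    have pm[measurable]: "(\<lambda>x::real^'n. piprod x powr \<alpha>) \<in> borel_measurable lborel"
      unfolding piprod_def by measurable
    have "(\<integral>\<^sup>+u. ennreal C * (g u * ennreal (piprod u powr \<alpha>) * indicator pos_orthant u) \<partial>lborel)
        = ennreal C * (\<integral>\<^sup>+u. g u * ennreal (piprod u powr \<alpha>) * indicator pos_orthant u \<partial>lborel)"
      by (rule nn_integral_cmult) measurable
    also have "(\<integral>\<^sup>+u. g u * ennreal (piprod u powr \<alpha>) * indicator pos_orthant u \<partial>lborel)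
        = (\<integral>\<^sup>+u. h u * ennreal (piprod u powr \<alpha>) * indicator pos_orthant u \<partial>lborel)"
      by (rule nn_integral_cong_AE) (use gae in auto)
    also have "... = (\<integral>\<^sup>+u. h u * ennreal (piprod u powr \<alpha>) * indicator pos_orthant u \<partial>lebesgue)"
      by (rule nn_integral_completion[symmetric])
    also have "... = (\<integral>\<^sup>+ x\<in>pos_orthant. ennreal ((\<phi> x) powr r * piprod x powr \<alpha>) \<partial>lebesgue)"
      by (rule nn_integral_cong) (auto simp: h_def \<psi>_def indicator_def ennreal_mult)
    finally show ?thesis .
  qed
  have "(\<integral>\<^sup>+u. (\<integral>\<^sup>+x. K x u \<partial>lborel) \<partial>lborel) \<le> (\<integral>\<^sup>+u. ennreal C * (g u * ennreal (piprod u powr \<alpha>) * indicator pos_orthant u) \<partial>lborel)"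
    by (rule nn_integral_mono) (rule E)
  then show ?thesis using Cst D F G by (simp add: C_def)
qed

end
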